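(* Let $\alpha>0$ and $\tau\ge 0$. Consider the variational problem of minimizing $$\int_0^1\frac{x}{x+\alpha g(x)}\,dx$$ over measurable functions $g:[0,1]\to[0,\infty)$ satisfying $\int_0^1 g(x)\,dx=\tau$. The optimal (minimum) value of this problem is $$\max\left(1-\sqrt{\tfrac{2}{3}\alpha\tau},\ \frac{4}{9}\cdot\frac{1}{\frac12+\alpha\tau}\right).$$ *)

theory Defs
  imports "HOL-Analysis.Analysis"
begin

end

theory Submission imports Defs "HOL-Analysis.Analysis" begin

definition hc :: "real \<Rightarrow> real \<Rightarrow> real" where "hc c x = max 0 (c * sqrt x - x)"
definition Hc :: "real \<Rightarrow> real \<Rightarrow> real" where
  "Hc c x = (if x \<le> c\<^sup>2 then 2*c/3 * (x * sqrt x) - x\<^sup>2/2 else c^4/6)"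
definition Fc :: "real \<Rightarrow> real \<Rightarrow> real" where
  "Fc c x = (if x \<le> c\<^sup>2 then 2/(3*c) * (x * sqrt x) else x - c\<^sup>2/3)"

lemma deriv_xsqrt: "x > 0 \<Longrightarrow> ((\<lambda>x. x * sqrt x) has_real_derivative (3/2 * sqrt x)) (at x)"
proof -
  assume x: "x > 0"
  have "((\<lambda>x. x * sqrt x) has_real_derivative (1 * sqrt x + (inverse (sqrt x) / 2) * x)) (at x)"
    by (rule DERIV_mult[OF DERIV_ident DERIV_real_sqrt]) (use x in auto)
  moreover have ss: "sqrt x * sqrt x = x" using x by simp
  moreover have "1 * sqrt x + (inverse (sqrt x) / 2) * x = 3/2 * sqrt x"
    using x by (simp add: field_simps)
  ultimately show ?thesis by simp
qed

lemma sq_le: assumes "c > 0" "x \<ge> 0" shows "x \<le> c\<^sup>2 \<longleftrightarrow> sqrt x \<le> c"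
  using assms by (metis real_le_lsqrt real_sqrt_le_iff less_imp_le real_sqrt_pow2 power_mono real_sqrt_ge_zero)

lemma hc_low: assumes "c > 0" "x \<ge> 0" "x \<le> c\<^sup>2" shows "hc c x = c * sqrt x - x"
proof -
  have "sqrt x \<le> c" using sq_le assms by blast
  hence "sqrt x * sqrt x \<le> c * sqrt x" by (intro mult_right_mono) (use assms in auto)
  moreover have "sqrt x * sqrt x = x" using assms by simp
  ultimately have "x \<le> c * sqrt x" by linarith
  thus ?thesis by (auto simp: hc_def max_def)
qed

lemma hc_high: assumes "c > 0" "x \<ge> 0" "x > c\<^sup>2" shows "hc c x = 0"
proof -
  have "sqrt x > c" using sq_le assms by (meson not_le)
  hence "c * sqrt x \<le> sqrt x * sqrt x" by (intro mult_right_mono) (use assms in auto)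
  moreover have "sqrt x * sqrt x = x" using assms by simp
  ultimately have "c * sqrt x \<le> x" by linarith
  thus ?thesis by (auto simp: hc_def max_def)
qed

lemma int_hc: assumes c: "c > 0" shows "(hc c has_integral Hc c 1) {0..1}"
proof -
  have "(hc c has_integral (Hc c 1 - Hc c 0)) {0..1}"
  proof (rule fundamental_theorem_of_calculus_strong[where S="{0, c\<^sup>2}"])
    fix x assume x: "x \<in> {0..1} - {0, c\<^sup>2}"
    show "(Hc c has_vector_derivative hc c x) (at x)"
    proof (cases "x < c\<^sup>2")
      case True
      have d: "((\<lambda>x. 2*c/3 * (x * sqrt x) - x\<^sup>2/2) has_real_derivative (2*c/3 * (3/2 * sqrt x) - 2 * x / 2)) (at x)"
        using x by (intro DERIV_diff DERIV_cmult deriv_xsqrt) (auto intro!: derivative_eq_intros)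
      have "((\<lambda>x. 2*c/3 * (x * sqrt x) - x\<^sup>2/2) has_real_derivative hc c x) (at x)"
        using d x True c by (simp add: hc_low)
      then have "(Hc c has_real_derivative hc c x) (at x)"
        by (rule has_field_derivative_transform_within_open[where S="{..<c\<^sup>2}"]) (use True in \<open>auto simp: Hc_def\<close>)
      then show ?thesis by (simp add: has_real_derivative_iff_has_vector_derivative)
    next
      case False
      then have F: "x > c\<^sup>2" using x by auto
      have "((\<lambda>x. c^4/6) has_real_derivative hc c x) (at x)"
        using F x c by (simp add: hc_high)
      then have "(Hc c has_real_derivative hc c x) (at x)"
        by (rule has_field_derivative_transform_within_open[where S="{c\<^sup>2<..}"]) (use F in \<open>auto simp: Hc_def\<close>)
      then show ?thesis by (simp add: has_real_derivative_iff_has_vector_derivative)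
    qed
  next
    show "continuous_on {0..1} (Hc c)"
      unfolding Hc_def
      by (rule continuous_on_cases_le[where h="\<lambda>x. x", OF _ _ continuous_on_id])
         (use c in \<open>auto intro!: continuous_intros simp: power_def\<close>)
  qed auto
  then show ?thesis by (simp add: Hc_def)
qed

lemma int_F: assumes c: "c > 0" shows "((\<lambda>x. x / (x + hc c x)) has_integral Fc c 1) {0..1}"
proof -
  have "((\<lambda>x. x / (x + hc c x)) has_integral (Fc c 1 - Fc c 0)) {0..1}"
  proof (rule fundamental_theorem_of_calculus_strong[where S="{0, c\<^sup>2}"])
    fix x assume x: "x \<in> {0..1} - {0, c\<^sup>2}"
    show "(Fc c has_vector_derivative x / (x + hc c x)) (at x)"
    proof (cases "x < c\<^sup>2")
      case True
      have d: "((\<lambda>x. 2/(3*c) * (x * sqrt x)) has_real_derivative (2/(3*c) * (3/2 * sqrt x))) (at x)"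
        using x by (intro DERIV_cmult deriv_xsqrt) auto
      have ss: "sqrt x * sqrt x = x" using x by simp
      have sp: "sqrt x > 0" using x by auto
      have "x / (x + hc c x) = x / (c * sqrt x)" using x True c by (simp add: hc_low)
      also have "\<dots> = sqrt x / c" using sp c by (subst ss[symmetric]) (simp add: field_simps)
      also have "\<dots> = 2/(3*c) * (3/2 * sqrt x)" using c by (simp add: field_simps)
      finally have e: "x / (x + hc c x) = 2/(3*c) * (3/2 * sqrt x)" .
      have "((\<lambda>x. 2/(3*c) * (x * sqrt x)) has_real_derivative x / (x + hc c x)) (at x)"
        using d e by simp
      then have "(Fc c has_real_derivative x / (x + hc c x)) (at x)"
        by (rule has_field_derivative_transform_within_open[where S="{..<c\<^sup>2}"]) (use True in \<open>auto simp: Fc_def\<close>)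
      then show ?thesis by (simp add: has_real_derivative_iff_has_vector_derivative)
    next
      case False
      then have F: "x > c\<^sup>2" using x by auto
      have "((\<lambda>x. x - c\<^sup>2/3) has_real_derivative x / (x + hc c x)) (at x)"
        using F x c by (auto simp: hc_high intro!: derivative_eq_intros)
      then have "(Fc c has_real_derivative x / (x + hc c x)) (at x)"
        by (rule has_field_derivative_transform_within_open[where S="{c\<^sup>2<..}"]) (use F in \<open>auto simp: Fc_def\<close>)
      then show ?thesis by (simp add: has_real_derivative_iff_has_vector_derivative)
    qed
  next
    show "continuous_on {0..1} (Fc c)"
      unfolding Fc_def
      by (rule continuous_on_cases_le[where h="\<lambda>x. x", OF _ _ continuous_on_id])
         (use c in \<open>auto intro!: continuous_intros simp: power_def\<close>)
  qed auto
  then show ?thesis by (simp add: Fc_def)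
qed

lemma pointwise:
  assumes c: "c > 0" and x: "x \<ge> 0" and h: "h \<ge> 0"
  shows "x / (x + hc c x) + hc c x / c\<^sup>2 \<le> x / (x + h) + h / c\<^sup>2"
proof (cases "x \<le> c\<^sup>2")
  case True
  show ?thesis
  proof (cases "x = 0")
    case True then show ?thesis using h c by (simp add: hc_def)
  next
    case False
    define s where "s = sqrt x"
    have s: "s > 0" "x = s * s" using x False by (auto simp: s_def)
    define t where "t = x + h"
    have t: "t > 0" using s h t_def by (metis add_pos_nonneg mult_pos_pos)
    have hh: "h = t - x" using t_def by simp
    have "x / (x + hc c x) + hc c x / c\<^sup>2 = 2 * s / c - s * s / c\<^sup>2"
      using True x c s by (simp add: hc_low s_def[symmetric] field_simps power2_eq_square)
    also have "\<dots> \<le> s * s / t + t / c\<^sup>2 - s * s / c\<^sup>2"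
    proof -
      have "0 \<le> (t - s * c)\<^sup>2" by simp
      hence "2 * s * c * t \<le> s * s * c * c + t * t" by (simp add: power2_eq_square algebra_simps)
      hence "2 * s / c \<le> s * s / t + t / c\<^sup>2" using t c
        by (simp add: field_simps power2_eq_square)
      thus ?thesis by simp
    qed
    also have "\<dots> = x / (x + h) + h / c\<^sup>2"
    proof -
      have "x / (x + h) = s * s / t" using t_def s by simp
      moreover have "h / c\<^sup>2 = t / c\<^sup>2 - s * s / c\<^sup>2" using hh s by (simp add: diff_divide_distrib)
      ultimately show ?thesis by simp
    qed
    finally show ?thesis .
  qed
next
  case False
  hence xc: "x > c\<^sup>2" by simp
  have hc0: "hc c x = 0" using hc_high[OF c x xc] .
  have xp: "x > 0" using xc c by (smt (verit) zero_less_power)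
  have xp: "x > 0" using xc c by (smt (verit) zero_less_power)
  have "h / (x + h) \<le> h / c\<^sup>2"
    using h xc c xp by (intro divide_left_mono) (auto intro!: mult_pos_pos)
  moreover have "x / (x + h) = 1 - h / (x + h)" using xp h by (simp add: field_simps)
  ultimately show ?thesis using hc0 xp by simp
qed
lemma integ_ratio:
  fixes \<alpha> :: real and g :: "real \<Rightarrow> real"
  assumes "\<alpha> > 0" "\<forall>x\<in>{0..1}. g x \<ge> 0" "set_integrable lborel {0..1} g"
  shows "set_integrable lborel {0..1} (\<lambda>x. x / (x + \<alpha> * g x))"
proof -
  let ?S = "{0..1::real}"
  have m: "(\<lambda>x. indicator ?S x *\<^sub>R g x) \<in> borel_measurable lborel"
    using assms(3) unfolding set_integrable_def by (rule borel_measurable_integrable)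
  have eq: "(\<lambda>x. indicator ?S x *\<^sub>R (x / (x + \<alpha> * g x))) =
     (\<lambda>x. indicator ?S x * (x / (x + \<alpha> * (indicator ?S x *\<^sub>R g x))))"
    by (auto simp: indicator_def fun_eq_iff)
  have meas: "set_borel_measurable lborel ?S (\<lambda>x. x / (x + \<alpha> * g x))"
    unfolding set_borel_measurable_def eq using m by measurable
  have one: "set_integrable lborel ?S (\<lambda>x. 1::real)"
    unfolding set_integrable_def by (rule borel_integrable_compact) auto
  have bd: "AE x in lborel. x \<in> ?S \<longrightarrow> norm (x / (x + \<alpha> * g x)) \<le> norm (1::real)"
  proof (rule AE_I2, safe)
    fix x :: real assume "x \<in> ?S"
    then have "x \<ge> 0" "\<alpha> * g x \<ge> 0" using assms by auto
    then show "norm (x / (x + \<alpha> * g x)) \<le> norm (1::real)"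
      by (cases "x + \<alpha> * g x = 0") (auto simp: divide_le_eq)
  qed
  show ?thesis by (rule set_integrable_bound[OF one meas bd])
qed

lemma hc_nonneg: "hc c x \<ge> 0" by (simp add: hc_def)

lemma hc_integrable: "set_integrable lborel {0..1} (hc c)"
  unfolding set_integrable_def hc_def
  by (rule borel_integrable_compact) (auto intro!: continuous_intros)

lemma LH: assumes "c > 0" shows "(LINT x:{0..1}|lborel. hc c x) = Hc c 1"
  using set_borel_integral_eq_integral(2)[OF hc_integrable] int_hc[OF assms]
  by (simp add: integral_unique)

lemma F_integrable: "set_integrable lborel {0..1} (\<lambda>x. x / (x + hc c x))"
  using integ_ratio[of 1 "hc c"] hc_integrable hc_nonneg by simp

lemma LF: assumes "c > 0" shows "(LINT x:{0..1}|lborel. x / (x + hc c x)) = Fc c 1"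
  using set_borel_integral_eq_integral(2)[OF F_integrable] int_F[OF assms]
  by (simp add: integral_unique)

lemma lower:
  fixes \<alpha> :: real and g :: "real \<Rightarrow> real"
  assumes c: "c > 0" and a: "\<alpha> > 0" and g: "\<forall>x\<in>{0..1}. g x \<ge> 0" "set_integrable lborel {0..1} g"
  shows "Fc c 1 + (Hc c 1 - \<alpha> * (LINT x:{0..1}|lborel. g x)) / c\<^sup>2
         \<le> (LINT x:{0..1}|lborel. x / (x + \<alpha> * g x))"
proof -
  let ?S = "{0..1::real}"
  have i1: "set_integrable lborel ?S (\<lambda>x. x / (x + hc c x) + hc c x / c\<^sup>2 - \<alpha> / c\<^sup>2 * g x)"
    by (intro set_integral_add(1) set_integral_diff(1) F_integrable set_integrable_divide
        set_integrable_mult_right hc_integrable g(2))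
  have i2: "set_integrable lborel ?S (\<lambda>x. x / (x + \<alpha> * g x))"
    by (rule integ_ratio[OF a g])
  have "(LINT x:?S|lborel. x / (x + hc c x) + hc c x / c\<^sup>2 - \<alpha> / c\<^sup>2 * g x)
      = (LINT x:?S|lborel. x / (x + hc c x)) + (LINT x:?S|lborel. hc c x) / c\<^sup>2
         - \<alpha> / c\<^sup>2 * (LINT x:?S|lborel. g x)"
    by (simp add: set_integral_diff set_integral_add set_integrable_divide
        F_integrable hc_integrable g(2) set_integrable_mult_right)
  also have "\<dots> = Fc c 1 + (Hc c 1 - \<alpha> * (LINT x:?S|lborel. g x)) / c\<^sup>2"
    by (simp add: LF[OF c] LH[OF c] diff_divide_distrib)
  finally have eq: "(LINT x:?S|lborel. x / (x + hc c x) + hc c x / c\<^sup>2 - \<alpha> / c\<^sup>2 * g x)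
      = Fc c 1 + (Hc c 1 - \<alpha> * (LINT x:?S|lborel. g x)) / c\<^sup>2" .
  have "(LINT x:?S|lborel. x / (x + hc c x) + hc c x / c\<^sup>2 - \<alpha> / c\<^sup>2 * g x)
       \<le> (LINT x:?S|lborel. x / (x + \<alpha> * g x))"
  proof (rule set_integral_mono[OF i1 i2])
    fix x :: real assume x: "x \<in> ?S"
    have "x / (x + hc c x) + hc c x / c\<^sup>2 \<le> x / (x + \<alpha> * g x) + \<alpha> * g x / c\<^sup>2"
      using pointwise[OF c, of x "\<alpha> * g x"] x g a by auto
    then show "x / (x + hc c x) + hc c x / c\<^sup>2 - \<alpha> / c\<^sup>2 * g x \<le> x / (x + \<alpha> * g x)"
      by simp
  qed
  then show ?thesis using eq by simp
qed

lemma witness: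
  fixes \<alpha> :: real
  assumes c: "c > 0" and a: "\<alpha> > 0"
  defines "g \<equiv> (\<lambda>x. hc c x / \<alpha>)"
  shows "(\<forall>x\<in>{0..1}. g x \<ge> 0) \<and> set_integrable lborel {0..1} g \<and>
         (LINT x:{0..1}|lborel. g x) = Hc c 1 / \<alpha> \<and>
         (LINT x:{0..1}|lborel. x / (x + \<alpha> * g x)) = Fc c 1"
proof -
  have "set_integrable lborel {0..1} g" unfolding g_def
    by (intro set_integrable_divide hc_integrable)
  moreover have "(LINT x:{0..1}|lborel. g x) = Hc c 1 / \<alpha>" unfolding g_def
    by (simp add: hc_integrable LH[OF c])
  moreover have "(\<lambda>x. x / (x + \<alpha> * g x)) = (\<lambda>x. x / (x + hc c x))" using a by (simp add: g_def)
  ultimately show ?thesis using LF[OF c] a by (simp add: g_def hc_nonneg)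
qed

lemma zero_int: "set_integrable lborel {0..1::real} (\<lambda>_. 0::real)"
  by (simp add: set_integrable_def)

lemma zero_value: "(LINT x:{0..1}|lborel. x / (x + (\<alpha>::real) * 0)) = 1"
proof -
  have si: "set_integrable lborel {0..1::real} (\<lambda>x. x / (x + 1 * (0::real)))"
    by (rule integ_ratio) (auto simp: zero_int)
  have "((\<lambda>x::real. x / (x + 1 * 0)) has_integral 1) {0..1}"
    by (rule has_integral_spike_finite[where S="{0}" and f="\<lambda>_. 1"])
       (auto intro: has_integral_const_real[of 1 0 1, simplified])
  then show ?thesis using set_borel_integral_eq_integral(2)[OF si]
    by (simp add: integral_unique)
qed

theorem mainTheorem3:
  fixes \<alpha> \<tau> :: real
  assumes "\<alpha> > 0" and "\<tau> \<ge> 0"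
  defines "V \<equiv> {(LINT x:{0..1}|lborel. x / (x + \<alpha> * g x)) | g :: real \<Rightarrow> real.
        (\<forall>x\<in>{0..1}. g x \<ge> 0) \<and>
        set_integrable lborel {0..1} g \<and>
        (LINT x:{0..1}|lborel. g x) = \<tau>}"
  shows "max (1 - sqrt (2/3 * \<alpha> * \<tau>)) (4/9 * (1 / (1/2 + \<alpha> * \<tau>))) \<in> V \<and>
         (\<forall>v\<in>V. max (1 - sqrt (2/3 * \<alpha> * \<tau>)) (4/9 * (1 / (1/2 + \<alpha> * \<tau>))) \<le> v)"
proof -
  note a = assms(1)
  define M where "M = max (1 - sqrt (2/3 * \<alpha> * \<tau>)) (4/9 * (1 / (1/2 + \<alpha> * \<tau>)))"
  define \<beta> where "\<beta> = \<alpha> * \<tau>"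
  have b0: "\<beta> \<ge> 0" using assms by (simp add: \<beta>_def)
  have key: "M \<in> V \<and> (\<forall>v\<in>V. M \<le> v)" if c: "c > 0" and H: "Hc c 1 = \<beta>" and F: "Fc c 1 = M" for c
  proof
    let ?g = "\<lambda>x. hc c x / \<alpha>"
    have w: "(\<forall>x\<in>{0..1}. ?g x \<ge> 0) \<and> set_integrable lborel {0..1} ?g \<and>
         (LINT x:{0..1}|lborel. ?g x) = Hc c 1 / \<alpha> \<and>
         (LINT x:{0..1}|lborel. x / (x + \<alpha> * ?g x)) = Fc c 1"
      by (rule witness[OF c a])
    have "Hc c 1 / \<alpha> = \<tau>" using H a by (simp add: \<beta>_def)
    then show "M \<in> V" unfolding V_def using w F by (intro CollectI exI[of _ ?g]) auto
    show "\<forall>v\<in>V. M \<le> v"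
    proof
      fix v assume "v \<in> V"
      then obtain g where g: "\<forall>x\<in>{0..1}. g x \<ge> 0" "set_integrable lborel {0..1} g"
        "(LINT x:{0..1}|lborel. g x) = \<tau>" and v: "v = (LINT x:{0..1}|lborel. x / (x + \<alpha> * g x))"
        unfolding V_def by blast
      show "M \<le> v" using lower[OF c a g(1,2)] g(3) H F v by (simp add: \<beta>_def)
    qed
  qed
  show ?thesis
  proof (cases "\<tau> = 0")
    case True
    have M1: "M = 1" unfolding M_def using True by simp
    have "1 = (LINT x:{0..1}|lborel. x / (x + \<alpha> * (\<lambda>_. 0::real) x)) \<and> (\<forall>x\<in>{0..1::real}. (\<lambda>_. 0::real) x \<ge> 0) \<and>
       set_integrable lborel {0..1} (\<lambda>_. 0::real) \<and> (LINT x:{0..1}|lborel. (\<lambda>_. 0::real) x) = \<tau>"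
      using zero_value[of \<alpha>] True by (simp add: set_integrable_def)
    then have "M \<in> V" unfolding V_def M1 by (intro CollectI exI[of _ "\<lambda>_. 0::real"])
    moreover have "\<forall>v\<in>V. M \<le> v"
    proof
      fix v assume "v \<in> V"
      then obtain g where g: "\<forall>x\<in>{0..1}. g x \<ge> 0" "set_integrable lborel {0..1} g"
        "(LINT x:{0..1}|lborel. g x) = \<tau>" and v: "v = (LINT x:{0..1}|lborel. x / (x + \<alpha> * g x))"
        unfolding V_def by blast
      have bnd: "1 - c\<^sup>2 / 6 \<le> v" if c: "c > 0" "c\<^sup>2 < 1" for c
      proof -
        have F1: "Fc c 1 = 1 - c\<^sup>2/3" and H1: "Hc c 1 = c^4/6" using c by (auto simp: Fc_def Hc_def)
        have H2: "Hc c 1 / c\<^sup>2 = c\<^sup>2/6" unfolding H1 using c by (simp add: power2_eq_square power4_eq_xxxx field_simps)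
        have "Fc c 1 + (Hc c 1 - \<alpha> * (LINT x:{0..1}|lborel. g x)) / c\<^sup>2 \<le> v"
          using lower[OF c(1) a g(1,2)] v by simp
        then have "1 - c\<^sup>2/3 + c\<^sup>2/6 \<le> v" using F1 H2 g(3) True by simp
        then show ?thesis by simp
      qed
      show "M \<le> v"
      proof (rule ccontr)
        assume "\<not> M \<le> v"
        then have lt: "v < 1" using M1 by simp
        define d where "d = min (1/2) (3 * (1 - v))"
        have d: "d > 0" "d < 1" "d \<le> 3 * (1 - v)" using lt by (auto simp: d_def)
        have "1 - (sqrt d)\<^sup>2 / 6 \<le> v" using d by (intro bnd) auto
        then show False using d by simp
      qed
    qed
    ultimately show ?thesis unfolding M_def by simp
  next
    case False
    then have bp: "\<beta> > 0" using assms by (simp add: \<beta>_def)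
    define s where "s = sqrt (2/3 * \<beta>)"
    have sp: "s > 0" using bp by (simp add: s_def)
    have bs: "\<beta> = 3 * s\<^sup>2 / 2" using bp by (simp add: s_def)
    have M': "M = max (1 - s) (8 / (9 * (1 + 3 * s\<^sup>2)))"
    proof -
      have e1: "sqrt (2/3 * \<alpha> * \<tau>) = s" by (simp add: s_def \<beta>_def mult.assoc)
      have e2: "4/9 * (1 / (1/2 + \<alpha> * \<tau>)) = 8 / (9 * (1 + 3 * s\<^sup>2))"
        using bs sp unfolding \<beta>_def by (simp add: field_simps)
      show ?thesis unfolding M_def e1 e2 ..
    qed
    show ?thesis
    proof (cases "s < 1/3")
      case True
      have cube: "0 \<le> (1 - 3 * s)^3" using True by simp
      have pos: "9 * (1 + 3 * s\<^sup>2) > 0" by (simp add: add_pos_nonneg)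
      have "8 \<le> (1 - s) * (9 * (1 + 3 * s\<^sup>2))"
        using cube by (simp add: power2_eq_square power3_eq_cube algebra_simps)
      then have "8 / (9 * (1 + 3 * s\<^sup>2)) \<le> 1 - s" using pos by (simp add: pos_divide_le_eq)
      then have Ms: "M = 1 - s" using M' by simp
      define c where "c = sqrt (3 * s)"
      have c: "c > 0" "c\<^sup>2 = 3 * s" using sp by (auto simp: c_def)
      have "Hc c 1 = \<beta>" using c True bs by (simp add: Hc_def power4_eq_xxxx power2_eq_square[symmetric]) (simp add: power2_eq_square)
      moreover have "Fc c 1 = M" using c True Ms by (simp add: Fc_def)
      ultimately show ?thesis using key c unfolding M_def by blast
    next
      case False
      have cube: "(1 - 3 * s)^3 \<le> 0" using False by simp
      have pos: "9 * (1 + 3 * s\<^sup>2) > 0" by (simp add: add_pos_nonneg)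
      have "(1 - s) * (9 * (1 + 3 * s\<^sup>2)) \<le> 8"
        using cube by (simp add: power2_eq_square power3_eq_cube algebra_simps)
      then have "1 - s \<le> 8 / (9 * (1 + 3 * s\<^sup>2))" using pos by (simp add: pos_le_divide_eq)
      then have Ms: "M = 8 / (9 * (1 + 3 * s\<^sup>2))" using M' by simp
      define c where "c = 3 * (\<beta> + 1/2) / 2"
      have "1/3 * (1/3) \<le> s * s" by (rule mult_mono) (use False in auto)
      then have "\<beta> \<ge> 1/6" using bs by (simp add: power2_eq_square)
      then have c: "c > 0" "c \<ge> 1" unfolding c_def by auto
      have c2: "1 \<le> c\<^sup>2" using c by (simp add: one_le_power)
      have "Hc c 1 = \<beta>" using c2 by (simp add: Hc_def c_def field_simps)
      moreover have "Fc c 1 = M" using c2 Ms bs by (simp add: Fc_def c_def field_simps)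
      ultimately show ?thesis using key c unfolding M_def by blast
    qed
  qed
qed
end
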